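(* Let $N,m>0$ be integers and let $u_1,\dots,u_m\in\overline{\mathbb F}_q$ (an algebraic closure of $\mathbb F_q$) be such that their minimal polynomials over $\mathbb F_q$ are pairwise distinct. Let $k_i=[\mathbb F_q(u_i):\mathbb F_q]$ and let $A(u_i)\in M_{k_i\times N}(\mathbb F_q)$ be the matrix defined by $[u_i^0,u_i^1,\dots,u_i^{N-1}]=[u_i^0,\dots,u_i^{k_i-1}]A(u_i)$. Then the $(k_1+\cdots+k_m)\times N$ matrix obtained by stacking $A(u_1),\dots,A(u_m)$ vertically has rank $\min\{k_1+\cdots+k_m,\,N\}$. *)

theory Defs
  imports "HOL-Algebra.Algebraic_Closure" "HOL-Algebra.Generated_Fields"
begin

definition rows_indep_over ::
  "('a, 'b) ring_scheme \<Rightarrow> 'a set \<Rightarrow> 'r set \<Rightarrow> nat \<Rightarrow> ('r \<Rightarrow> nat \<Rightarrow> 'a) \<Rightarrow> bool" where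
  "rows_indep_over R K I N M \<longleftrightarrow>
     (\<forall>c. (\<forall>i\<in>I. c i \<in> K) \<longrightarrow>
          (\<forall>l<N. finsum R (\<lambda>i. c i \<otimes>\<^bsub>R\<^esub> M i l) I = \<zero>\<^bsub>R\<^esub>) \<longrightarrow>
          (\<forall>i\<in>I. c i = \<zero>\<^bsub>R\<^esub>))"

definition mat_rank_over ::
  "('a, 'b) ring_scheme \<Rightarrow> 'a set \<Rightarrow> 'r set \<Rightarrow> nat \<Rightarrow> ('r \<Rightarrow> nat \<Rightarrow> 'a) \<Rightarrow> nat" where
  "mat_rank_over R K Rows N M =
     Max {card I | I. I \<subseteq> Rows \<and> rows_indep_over R K I N M}"

end

theory Submission
  imports Defs
begin

context ring begin

lemma finsum_swap_aux:
  assumes "finite B"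
  shows "finite A \<Longrightarrow> (\<And>a b. a \<in> A \<Longrightarrow> b \<in> B \<Longrightarrow> f a b \<in> carrier R) \<Longrightarrow>
    (\<Oplus>a\<in>A. \<Oplus>b\<in>B. f a b) = (\<Oplus>b\<in>B. \<Oplus>a\<in>A. f a b)"
proof (induction A rule: finite_induct)
  case empty
  then show ?case by (simp add: finsum_zero)
next
  case (insert x F)
  have "(\<Oplus>a\<in>insert x F. \<Oplus>b\<in>B. f a b) = (\<Oplus>b\<in>B. f x b) \<oplus> (\<Oplus>a\<in>F. \<Oplus>b\<in>B. f a b)"
    using insert by (subst finsum_insert) (auto intro!: finsum_closed)
  also have "\<dots> = (\<Oplus>b\<in>B. f x b) \<oplus> (\<Oplus>b\<in>B. \<Oplus>a\<in>F. f a b)"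
    using insert by simp
  also have "\<dots> = (\<Oplus>b\<in>B. f x b \<oplus> (\<Oplus>a\<in>F. f a b))"
    using insert assms by (subst finsum_addf) (auto intro!: finsum_closed)
  also have "\<dots> = (\<Oplus>b\<in>B. \<Oplus>a\<in>insert x F. f a b)"
    using insert by (intro finsum_cong') (auto simp: finsum_insert intro!: finsum_closed)
  finally show ?case .
qed

lemma finsum_swap:
  assumes "finite A" "finite B" "\<And>a b. a \<in> A \<Longrightarrow> b \<in> B \<Longrightarrow> f a b \<in> carrier R"
  shows "(\<Oplus>a\<in>A. \<Oplus>b\<in>B. f a b) = (\<Oplus>b\<in>B. \<Oplus>a\<in>A. f a b)"
  using finsum_swap_aux assms by blast

lemma finsum_neg:
  assumes "finite A" "\<And>a. a \<in> A \<Longrightarrow> f a \<in> carrier R"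
  shows "(\<Oplus>a\<in>A. \<ominus> f a) = \<ominus> (\<Oplus>a\<in>A. f a)"
  using assms
proof (induction A rule: finite_induct)
  case empty
  then show ?case by simp
next
  case (insert x F)
  then show ?case
    by (simp add: finsum_insert finsum_closed Pi_def minus_add)
qed


lemma finsum_in_subring:
  assumes "subring K R" "finite A"
  shows "(\<And>a. a \<in> A \<Longrightarrow> f a \<in> K) \<Longrightarrow> (\<Oplus>a\<in>A. f a) \<in> K"
  using assms(2)
proof (induction A rule: finite_induct)
  case empty
  then show ?case using subringE(2)[OF assms(1)] by simp
next
  case (insert x F)
  then show ?case using subringE(1,7)[OF assms(1)]
    by (subst finsum_insert) (auto simp: Pi_def)
qed

end

context field begin

lemma L0:
  assumes K: "subfield K R" and fY: "finite Ys"
  shows "finite Xs \<Longrightarrow> card Ys < card Xs \<Longrightarrow> (\<And>x y. x\<in>Xs \<Longrightarrow> y\<in>Ys \<Longrightarrow> v x y \<in> K) \<Longrightarrow>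
    \<exists>c. (\<forall>x\<in>Xs. c x \<in> K) \<and> (\<exists>x\<in>Xs. c x \<noteq> \<zero>) \<and> (\<forall>y\<in>Ys. (\<Oplus>x\<in>Xs. c x \<otimes> v x y) = \<zero>)"
  using fY
proof (induction Ys arbitrary: Xs v rule: finite_induct)
  case empty
  then have "Xs \<noteq> {}" by auto
  then obtain x where "x\<in>Xs" by auto
  then show ?case using subringE(3)[OF subfieldE(1)[OF K]] subfieldE(6)[OF K]
    by (intro exI[of _ "\<lambda>_. \<one>"]) auto
next
  case (insert y Ys)
  note SR = subringE[OF subfieldE(1)[OF K]]
  have KC: "\<And>a. a \<in> K \<Longrightarrow> a \<in> carrier R" using SR(1) by auto
  show ?case
  proof (cases "\<forall>x\<in>Xs. v x y = \<zero>")
    case True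
    have "card Ys < card Xs" using insert by simp
    then obtain c where c: "\<forall>x\<in>Xs. c x \<in> K" "\<exists>x\<in>Xs. c x \<noteq> \<zero>" "\<forall>z\<in>Ys. (\<Oplus>x\<in>Xs. c x \<otimes> v x z) = \<zero>"
      using insert.IH[of Xs v] insert.prems by auto
    have "(\<Oplus>x\<in>Xs. c x \<otimes> v x y) = (\<Oplus>x\<in>Xs. \<zero>)"
      using True c(1) KC by (intro finsum_cong') auto
    then have "(\<Oplus>x\<in>Xs. c x \<otimes> v x y) = \<zero>" by (simp add: finsum_zero)
    then show ?thesis using c by (intro exI[of _ c]) auto
  next
    case False
    then obtain x0 where x0: "x0 \<in> Xs" "v x0 y \<noteq> \<zero>" by auto
    define a where "a = v x0 y"
    have aK: "a \<in> K" using x0 insert.prems a_def by auto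
    have ia: "inv a \<in> K" "a \<otimes> inv a = \<one>" "inv a \<otimes> a = \<one>"
      using subfield_m_inv[OF K, of a] aK x0(2) a_def by auto
    define Xp where "Xp = Xs - {x0}"
    define w where "w x z = v x z \<ominus> (v x y \<otimes> inv a) \<otimes> v x0 z" for x z
    have fXp: "finite Xp" using insert.prems Xp_def by auto
    have cXp: "card Ys < card Xp"
      using insert.prems insert.hyps x0 Xp_def by (simp add: card_Diff_singleton)
    have vK: "\<And>x z. x \<in> Xs \<Longrightarrow> z \<in> insert y Ys \<Longrightarrow> v x z \<in> K" using insert.prems by auto
    have wK: "\<And>x z. x \<in> Xp \<Longrightarrow> z \<in> Ys \<Longrightarrow> w x z \<in> K"
      unfolding w_def a_minus_def using vK Xp_def x0 ia SR by auto
    obtain c' where c': "\<forall>x\<in>Xp. c' x \<in> K" "\<exists>x\<in>Xp. c' x \<noteq> \<zero>"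
        "\<forall>z\<in>Ys. (\<Oplus>x\<in>Xp. c' x \<otimes> w x z) = \<zero>"
      using insert.IH[OF fXp cXp, of w] wK by blast
    define S where "S = (\<Oplus>x\<in>Xp. c' x \<otimes> v x y)"
    have SK: "S \<in> carrier R" unfolding S_def using c' vK Xp_def KC
      by (intro finsum_closed) auto
    define c where "c = c'(x0 := \<ominus> S \<otimes> inv a)"
    have XX: "Xs = insert x0 Xp" "x0 \<notin> Xp" using Xp_def x0 by auto
    have split: "(\<Oplus>x\<in>Xs. c x \<otimes> v x z) = (\<ominus> S \<otimes> inv a) \<otimes> v x0 z \<oplus> (\<Oplus>x\<in>Xp. c' x \<otimes> v x z)"
      if "z \<in> insert y Ys" for z
    proof -
      have "(\<Oplus>x\<in>Xs. c x \<otimes> v x z) = c x0 \<otimes> v x0 z \<oplus> (\<Oplus>x\<in>Xp. c x \<otimes> v x z)"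
        unfolding XX(1) using XX(2) fXp that vK c' KC Xp_def x0 ia SK
        by (subst finsum_insert) (auto simp: c_def)
      also have "(\<Oplus>x\<in>Xp. c x \<otimes> v x z) = (\<Oplus>x\<in>Xp. c' x \<otimes> v x z)"
        using XX(2) c' vK KC Xp_def that by (intro finsum_cong') (auto simp: c_def)
      finally show ?thesis by (simp add: c_def)
    qed
    have SK': "S \<in> K" unfolding S_def using c' vK Xp_def SR
      by (intro finsum_in_subring[OF subfieldE(1)[OF K] fXp]) auto
    have cK: "\<forall>x\<in>Xs. c x \<in> K" unfolding c_def using c' ia SK' SR Xp_def by auto
    have nz: "\<exists>x\<in>Xs. c x \<noteq> \<zero>" using c' XX unfolding c_def by auto
    have ay: "v x0 y = a" using a_def by simp
    have eqy: "(\<Oplus>x\<in>Xs. c x \<otimes> v x y) = \<zero>"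
      unfolding split[OF insertI1] ay S_def[symmetric]
      using SK ia KC aK by (algebra)
    have eqz: "(\<Oplus>x\<in>Xs. c x \<otimes> v x z) = \<zero>" if z: "z \<in> Ys" for z
    proof -
      define b where "b = inv a \<otimes> v x0 z"
      define T where "T = (\<Oplus>x\<in>Xp. c' x \<otimes> v x z)"
      have bC: "b \<in> carrier R" unfolding b_def using ia KC vK x0 z by auto
      have TC: "T \<in> carrier R" unfolding T_def using c' vK Xp_def KC z
        by (intro finsum_closed) auto
      have "\<zero> = (\<Oplus>x\<in>Xp. c' x \<otimes> w x z)" using c' z by simp
      also have "\<dots> = (\<Oplus>x\<in>Xp. c' x \<otimes> v x z \<oplus> \<ominus> ((c' x \<otimes> v x y) \<otimes> b))"
        using c' vK Xp_def KC z ia x0 unfolding w_def b_def a_minus_def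
        by (intro finsum_cong') (auto simp: r_distr r_minus m_assoc)
      also have "\<dots> = T \<oplus> \<ominus> (S \<otimes> b)"
      proof -
        have cv: "\<And>x. x \<in> Xp \<Longrightarrow> c' x \<otimes> v x y \<in> carrier R"
          using c' vK Xp_def KC by auto
        have "(\<Oplus>x\<in>Xp. \<ominus> ((c' x \<otimes> v x y) \<otimes> b)) = \<ominus> (\<Oplus>x\<in>Xp. (c' x \<otimes> v x y) \<otimes> b)"
          using cv bC fXp by (intro finsum_neg) auto
        also have "(\<Oplus>x\<in>Xp. (c' x \<otimes> v x y) \<otimes> b) = S \<otimes> b"
          unfolding S_def using cv bC fXp by (intro finsum_ldistr[symmetric]) auto
        finally have n: "(\<Oplus>x\<in>Xp. \<ominus> ((c' x \<otimes> v x y) \<otimes> b)) = \<ominus> (S \<otimes> b)" .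
        have "(\<Oplus>x\<in>Xp. c' x \<otimes> v x z \<oplus> \<ominus> ((c' x \<otimes> v x y) \<otimes> b))
           = (\<Oplus>x\<in>Xp. c' x \<otimes> v x z) \<oplus> (\<Oplus>x\<in>Xp. \<ominus> ((c' x \<otimes> v x y) \<otimes> b))"
          using c' vK Xp_def KC z bC cv by (intro finsum_addf) (auto simp: Pi_def)
        then show ?thesis unfolding n T_def .
      qed
      finally have e: "T \<oplus> \<ominus> (S \<otimes> b) = \<zero>" by simp
      have "(\<Oplus>x\<in>Xs. c x \<otimes> v x z) = (\<ominus> S \<otimes> inv a) \<otimes> v x0 z \<oplus> T"
        unfolding T_def using split z by simp
      also have "\<dots> = T \<oplus> \<ominus> (S \<otimes> b)"
      proof -
        have "inv a \<in> carrier R" "v x0 z \<in> carrier R" using ia KC vK x0 z by auto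
        then show ?thesis unfolding b_def using SK TC by algebra
      qed
      finally show ?thesis using e by simp
    qed
    show ?thesis using cK nz eqy eqz by (intro exI[of _ c]) auto
  qed
qed

end
context field begin

lemma indep_subset:
  assumes K: "subfield K R" and fin: "finite I0" and sub: "I \<subseteq> I0"
    and MC: "\<And>i l. i \<in> I0 \<Longrightarrow> l < N \<Longrightarrow> M i l \<in> carrier R"
    and ind: "rows_indep_over R K I0 N M"
  shows "rows_indep_over R K I N M"
  unfolding rows_indep_over_def
proof (intro allI impI ballI)
  fix c i assume cK: "\<forall>i\<in>I. c i \<in> K" and sums: "\<forall>l<N. (\<Oplus>i\<in>I. c i \<otimes> M i l) = \<zero>"
    and iI: "i \<in> I"
  define c' where "c' j = (if j \<in> I then c j else \<zero>)" for j
  have KC: "K \<subseteq> carrier R" using subfieldE(3)[OF K] .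
  have c'K: "\<forall>j\<in>I0. c' j \<in> K" using cK subringE(2)[OF subfieldE(1)[OF K]] by (auto simp: c'_def)
  have "\<forall>l<N. (\<Oplus>j\<in>I0. c' j \<otimes> M j l) = \<zero>"
  proof (intro allI impI)
    fix l assume l: "l < N"
    have fI: "finite I" using fin sub finite_subset by auto
    have "(\<Oplus>j\<in>I0. c' j \<otimes> M j l) = (\<Oplus>j\<in>I \<union> (I0 - I). c' j \<otimes> M j l)"
      using sub by (simp add: Un_absorb1)
    also have "\<dots> = (\<Oplus>j\<in>I. c' j \<otimes> M j l) \<oplus> (\<Oplus>j\<in>I0 - I. c' j \<otimes> M j l)"
      using fin fI c'K KC MC l sub by (intro finsum_Un_disjoint) (auto simp: Pi_def intro!: m_closed)
    also have "(\<Oplus>j\<in>I0 - I. c' j \<otimes> M j l) = (\<Oplus>j\<in>I0 - I. \<zero>)"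
      using MC l by (intro finsum_cong') (auto simp: c'_def)
    also have "(\<Oplus>j\<in>I. c' j \<otimes> M j l) = (\<Oplus>j\<in>I. c j \<otimes> M j l)"
      using MC l sub cK KC by (intro finsum_cong') (auto simp: c'_def intro!: m_closed)
    finally show "(\<Oplus>j\<in>I0. c' j \<otimes> M j l) = \<zero>" using sums l by (simp add: finsum_zero)
  qed
  then have "\<forall>j\<in>I0. c' j = \<zero>" using ind c'K unfolding rows_indep_over_def by blast
  then have "c' i = \<zero>" using iI sub by auto
  then show "c i = \<zero>" using iI by (simp add: c'_def)
qed

lemma indep_card_le:
  assumes K: "subfield K R" and fin: "finite I"
    and MK: "\<And>i l. i \<in> I \<Longrightarrow> l < N \<Longrightarrow> M i l \<in> K"
    and ind: "rows_indep_over R K I N M"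
  shows "card I \<le> N"
proof (rule ccontr)
  assume "\<not> card I \<le> N"
  then have "card {..<N} < card I" by simp
  then obtain c where c: "\<forall>x\<in>I. c x \<in> K" "\<exists>x\<in>I. c x \<noteq> \<zero>" "\<forall>y\<in>{..<N}. (\<Oplus>x\<in>I. c x \<otimes> M x y) = \<zero>"
    using L0[OF K _ fin, of "{..<N}" M] MK by blast
  then show False using ind unfolding rows_indep_over_def by auto
qed


lemma L2:
  assumes K: "subfield K R" and fin: "finite Rs"
    and MK: "\<And>r l. r \<in> Rs \<Longrightarrow> l < s \<Longrightarrow> M r l \<in> K"
    and colind: "\<And>d. \<forall>l<s. d l \<in> K \<Longrightarrow> \<forall>r\<in>Rs. (\<Oplus>l\<in>{..<s}. d l \<otimes> M r l) = \<zero> \<Longrightarrow> \<forall>l<s. d l = \<zero>"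
  shows "\<exists>I \<subseteq> Rs. card I = s \<and> rows_indep_over R K I s M"
proof -
  define S where "S = {I. I \<subseteq> Rs \<and> rows_indep_over R K I s M}"
  have finS: "finite S" using fin unfolding S_def by auto
  have e: "{} \<in> S" unfolding S_def rows_indep_over_def by auto
  define t where "t = Max (card ` S)"
  obtain I0 where I0: "I0 \<in> S" "card I0 = t"
  proof -
    have "t \<in> card ` S" unfolding t_def using finS e by (intro Max_in) auto
    then show ?thesis using that by auto
  qed
  have maxt: "\<And>J. J \<in> S \<Longrightarrow> card J \<le> t" using Max_ge finS t_def by auto
  have I0s: "I0 \<subseteq> Rs" "rows_indep_over R K I0 s M" using I0 S_def by auto
  have fI0: "finite I0" using fin I0s finite_subset by auto
  have KC: "\<And>a. a \<in> K \<Longrightarrow> a \<in> carrier R" using subfieldE(3)[OF K] by auto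
  have MC: "\<And>r l. r \<in> Rs \<Longrightarrow> l < s \<Longrightarrow> M r l \<in> carrier R" using MK KC by auto
  have ge: "s \<le> card I0"
  proof (rule ccontr)
    assume "\<not> s \<le> card I0"
    then have "card I0 < card {..<s}" by simp
    then obtain d where d: "\<forall>l\<in>{..<s}. d l \<in> K" "\<exists>l\<in>{..<s}. d l \<noteq> \<zero>"
        "\<forall>i\<in>I0. (\<Oplus>l\<in>{..<s}. d l \<otimes> M i l) = \<zero>"
    proof -
      have "\<And>x y. x < s \<Longrightarrow> y \<in> I0 \<Longrightarrow> M y x \<in> K" using MK I0s by auto
      then show ?thesis using L0[OF K fI0, of "{..<s}" "\<lambda>l i. M i l"] that \<open>card I0 < card {..<s}\<close> by auto
    qed
    have dC: "\<And>l. l < s \<Longrightarrow> d l \<in> carrier R" using d KC by auto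
    have "\<forall>r\<in>Rs. (\<Oplus>l\<in>{..<s}. d l \<otimes> M r l) = \<zero>"
    proof
      fix r assume r: "r \<in> Rs"
      show "(\<Oplus>l\<in>{..<s}. d l \<otimes> M r l) = \<zero>"
      proof (cases "r \<in> I0")
        case True then show ?thesis using d by auto
      next
        case False
        define J where "J = insert r I0"
        have "J \<notin> S"
        proof
          assume "J \<in> S"
          then have "card J \<le> t" by (rule maxt)
          moreover have "card J = t + 1" using False fI0 I0 J_def by simp
          ultimately show False by simp
        qed
        then have "\<not> rows_indep_over R K J s M" using r I0s J_def S_def by auto
        then obtain c where c: "\<forall>i\<in>J. c i \<in> K" "\<forall>l<s. (\<Oplus>i\<in>J. c i \<otimes> M i l) = \<zero>"
            "\<exists>i\<in>J. c i \<noteq> \<zero>"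
          unfolding rows_indep_over_def by blast
        have cC: "\<And>i. i \<in> J \<Longrightarrow> c i \<in> carrier R" using c KC by auto
        have MC0: "\<And>i l. i \<in> I0 \<Longrightarrow> l < s \<Longrightarrow> M i l \<in> carrier R" using MC I0s by auto
        have sC: "(\<Oplus>i\<in>I0. c i \<otimes> M i l) \<in> carrier R" if "l < s" for l
          using cC MC0 that J_def by (intro finsum_closed) (auto simp: Pi_def)
        have split: "(\<Oplus>i\<in>J. c i \<otimes> M i l) = c r \<otimes> M r l \<oplus> (\<Oplus>i\<in>I0. c i \<otimes> M i l)" if "l < s" for l
          unfolding J_def using False fI0 cC MC0 MC that r J_def
          by (subst finsum_insert) (auto simp: Pi_def intro!: m_closed)
        have cr: "c r \<noteq> \<zero>"
        proof
          assume cr0: "c r = \<zero>"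
          have "\<forall>l<s. (\<Oplus>i\<in>I0. c i \<otimes> M i l) = \<zero>"
            using split c(2) cr0 MC r sC by auto
          then have "\<forall>i\<in>I0. c i = \<zero>" using I0s(2) c(1) J_def unfolding rows_indep_over_def by auto
          then show False using c(3) cr0 J_def by auto
        qed
        have rel: "c r \<otimes> M r l = \<ominus> (\<Oplus>i\<in>I0. c i \<otimes> M i l)" if "l < s" for l
          using split[OF that] c(2) that sC[OF that] MC[OF r that] cC[of r] J_def
          by (intro sum_zero_eq_neg) auto
        have crC: "c r \<in> carrier R" using cC J_def by auto
        have "c r \<otimes> (\<Oplus>l\<in>{..<s}. d l \<otimes> M r l) = (\<Oplus>l\<in>{..<s}. d l \<otimes> (c r \<otimes> M r l))"
          using crC dC MC r by (subst finsum_rdistr) (auto simp: Pi_def m_lcomm intro!: finsum_cong')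
        also have "\<dots> = (\<Oplus>l\<in>{..<s}. \<ominus> (\<Oplus>i\<in>I0. d l \<otimes> (c i \<otimes> M i l)))"
        proof (intro finsum_cong')
          fix l assume l: "l \<in> {..<s}"
          have "d l \<otimes> (c r \<otimes> M r l) = \<ominus> (d l \<otimes> (\<Oplus>i\<in>I0. c i \<otimes> M i l))"
            using rel l dC sC by (simp add: r_minus)
          also have "d l \<otimes> (\<Oplus>i\<in>I0. c i \<otimes> M i l) = (\<Oplus>i\<in>I0. d l \<otimes> (c i \<otimes> M i l))"
            using l dC cC MC0 J_def fI0 by (intro finsum_rdistr) (auto simp: Pi_def)
          finally show "d l \<otimes> (c r \<otimes> M r l) = \<ominus> (\<Oplus>i\<in>I0. d l \<otimes> (c i \<otimes> M i l))" .
        qed (use dC crC MC r cC MC0 J_def in \<open>auto intro!: finsum_closed\<close>)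
        also have "\<dots> = \<ominus> (\<Oplus>l\<in>{..<s}. \<Oplus>i\<in>I0. d l \<otimes> (c i \<otimes> M i l))"
          using dC cC MC0 J_def by (intro finsum_neg) (auto intro!: finsum_closed)
        also have "(\<Oplus>l\<in>{..<s}. \<Oplus>i\<in>I0. d l \<otimes> (c i \<otimes> M i l)) = (\<Oplus>i\<in>I0. \<Oplus>l\<in>{..<s}. d l \<otimes> (c i \<otimes> M i l))"
          using dC cC MC0 J_def fI0 by (intro finsum_swap) auto
        also have "\<dots> = (\<Oplus>i\<in>I0. c i \<otimes> (\<Oplus>l\<in>{..<s}. d l \<otimes> M i l))"
        proof (intro finsum_cong')
          fix i assume i: "i \<in> I0"
          have "(\<Oplus>l\<in>{..<s}. d l \<otimes> (c i \<otimes> M i l)) = (\<Oplus>l\<in>{..<s}. c i \<otimes> (d l \<otimes> M i l))"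
            using i dC cC MC0 J_def by (intro finsum_cong') (auto simp: m_lcomm)
          also have "\<dots> = c i \<otimes> (\<Oplus>l\<in>{..<s}. d l \<otimes> M i l)"
            using i dC cC MC0 J_def by (intro finsum_rdistr[symmetric]) auto
          finally show "(\<Oplus>l\<in>{..<s}. d l \<otimes> (c i \<otimes> M i l)) = c i \<otimes> (\<Oplus>l\<in>{..<s}. d l \<otimes> M i l)" .
        qed (use dC cC MC0 J_def in \<open>auto intro!: finsum_closed\<close>)
        also have "\<dots> = (\<Oplus>i\<in>I0. \<zero>)"
          using d(3) cC J_def by (intro finsum_cong') auto
        finally have "c r \<otimes> (\<Oplus>l\<in>{..<s}. d l \<otimes> M r l) = \<zero>" by (simp add: finsum_zero)
        moreover have "(\<Oplus>l\<in>{..<s}. d l \<otimes> M r l) \<in> carrier R"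
          using dC MC r by (intro finsum_closed) auto
        ultimately show ?thesis using cr crC integral by blast
      qed
    qed
    then have "\<forall>l<s. d l = \<zero>" using colind d(1) by auto
    then show False using d(2) by auto
  qed
  obtain I where I: "I \<subseteq> I0" "card I = s" using obtain_subset_with_card_n[OF ge] by blast
  have "rows_indep_over R K I s M"
    using indep_subset[OF K fI0 I(1) _ I0s(2)] MC I0s by auto
  then show ?thesis using I I0s by auto
qed

end

context domain begin

lemma Irr_unique:
  assumes K: "subfield K R" and x: "x \<in> carrier R" and alg: "(algebraic over K) x"
    and f: "f \<in> carrier (K[X])" "pirreducible K f" "eval f x = \<zero>" "lead_coeff f = \<one>"
  shows "Irr K x = f"
  unfolding Irr_def
  using the1_equality[OF minimal_polynomial_is_unique[OF K x alg]] f by blast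

lemma deg_ge:
  assumes K: "subfield K R" and fS: "finite S"
  shows "(\<And>i. i \<in> S \<Longrightarrow> u i \<in> carrier R \<and> (algebraic over K) (u i)) \<Longrightarrow>
    (\<And>i j. i \<in> S \<Longrightarrow> j \<in> S \<Longrightarrow> i \<noteq> j \<Longrightarrow> Irr K (u i) \<noteq> Irr K (u j)) \<Longrightarrow>
    p \<in> carrier (K[X]) \<Longrightarrow> p \<noteq> [] \<Longrightarrow> (\<And>i. i \<in> S \<Longrightarrow> eval p (u i) = \<zero>) \<Longrightarrow>
    (\<Sum>i\<in>S. degree (Irr K (u i))) \<le> degree p"
  using fS
proof (induction S arbitrary: p rule: finite_induct)
  case empty
  then show ?case by simp
next
  case (insert a S)
  have ua: "u a \<in> carrier R" "(algebraic over K) (u a)" using insert.prems by auto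
  note IrrA = IrrE[OF K ua]
  have sub: "subring K R" using subfieldE(1)[OF K] .
  have "Irr K (u a) pdivides p"
    using Irr_minimal[OF K ua insert.prems(3)] insert.prems(5) by auto
  then have "Irr K (u a) divides\<^bsub>K[X]\<^esub> p"
    using pdivides_iff_shell[OF K IrrA(1) insert.prems(3)] by simp
  then obtain q where q: "q \<in> carrier (K[X])" "p = Irr K (u a) \<otimes>\<^bsub>K[X]\<^esub> q"
    by (auto elim!: dividesE)
  have pm: "p = poly_mult (Irr K (u a)) q" using q(2) by (simp add: univ_poly_mult)
  have qC: "set q \<subseteq> carrier R"
    using q(1) polynomial_in_carrier[OF sub] unfolding univ_poly_carrier[symmetric] by auto
  have qne: "q \<noteq> []"
  proof
    assume "q = []"
    then have "p = []" using pm poly_mult_zero(2)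
      using IrrA(1) polynomial_in_carrier[OF sub] unfolding univ_poly_carrier[symmetric] by auto
    then show False using insert.prems(4) by simp
  qed
  have Irrne: "Irr K (u a) \<noteq> []"
    using IrrA(2) unfolding ring_irreducible_def univ_poly_zero by auto
  have degp: "degree p = degree (Irr K (u a)) + degree q"
    using poly_mult_degree_eq[OF sub, of "Irr K (u a)" q] IrrA(1) q(1) pm qne Irrne
    unfolding univ_poly_carrier by auto
  have evq: "eval q (u i) = \<zero>" if i: "i \<in> S" for i
  proof -
    have ui: "u i \<in> carrier R" "(algebraic over K) (u i)" using insert.prems i by auto
    note H = ring_hom_memE[OF eval_is_hom[OF sub ui(1)]]
    have "eval p (u i) = eval (Irr K (u a)) (u i) \<otimes> eval q (u i)"
      using H(2)[OF IrrA(1) q(1)] q(2) by simp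
    then have z: "eval (Irr K (u a)) (u i) \<otimes> eval q (u i) = \<zero>" using insert.prems(5) i by auto
    have "eval (Irr K (u a)) (u i) \<noteq> \<zero>"
    proof
      assume "eval (Irr K (u a)) (u i) = \<zero>"
      then have "Irr K (u i) = Irr K (u a)"
        using Irr_unique[OF K ui] IrrA by blast
      moreover have "i \<noteq> a" using i insert.hyps by auto
      ultimately show False using insert.prems(2)[of i a] i by auto
    qed
    then show ?thesis using z integral H(1)[OF IrrA(1)] H(1)[OF q(1)] by auto
  qed
  have "(\<Sum>i\<in>S. degree (Irr K (u i))) \<le> degree q"
    using insert.IH[OF _ _ q(1) qne evq] insert.prems(1,2) by auto
  then show ?case using insert.hyps degp by simp
qed

lemma eval_rev_map:
  assumes x: "x \<in> carrier R" and d: "\<And>l. l < s \<Longrightarrow> d l \<in> carrier R"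
  shows "eval (rev (map d [0..<s])) x = (\<Oplus>l\<in>{..<s}. d l \<otimes> x [^] l)"
  using d
proof (induction s)
  case 0
  then show ?case by simp
next
  case (Suc s)
  have "eval (rev (map d [0..<Suc s])) x = d s \<otimes> x [^] s \<oplus> eval (rev (map d [0..<s])) x"
    by simp
  also have "\<dots> = d s \<otimes> x [^] s \<oplus> (\<Oplus>l\<in>{..<s}. d l \<otimes> x [^] l)"
    using Suc by simp
  also have "\<dots> = (\<Oplus>l\<in>insert s {..<s}. d l \<otimes> x [^] l)"
    using Suc.prems x by (subst finsum_insert) (auto simp: Pi_def)
  finally show ?case by (simp add: lessThan_Suc)
qed

lemma normalize_nil:
  "normalize Ks = [] \<Longrightarrow> set Ks \<subseteq> { \<zero> }"
  by (induct Ks) (auto, meson list.discI,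
                    metis all_not_in_conv list.discI list.sel(3) singletonD subset_singletonD)

end

theorem lemma2p2:
  fixes L :: "('a, 'b) ring_scheme" (structure)
    and K :: "'a set" and q N m :: nat
    and u :: "nat \<Rightarrow> 'a"
    and k :: "nat \<Rightarrow> nat"
    and A :: "nat \<Rightarrow> nat \<Rightarrow> nat \<Rightarrow> 'a"
  assumes closure: "algebraic_closure L K"
    and finK: "finite K" and cardK: "card K = q"
    and N_pos: "N > 0" and m_pos: "m > 0"
    and u_in: "\<And>i. i < m \<Longrightarrow> u i \<in> carrier L"
    and distinct_minpoly: "\<And>i j. i < m \<Longrightarrow> j < m \<Longrightarrow> i \<noteq> j \<Longrightarrow>
            ring.Irr L K (u i) \<noteq> ring.Irr L K (u j)"
    and k_def: "\<And>i. i < m \<Longrightarrow> k i = ring.dim L K (generate_field L (insert (u i) K))"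
    and A_in: "\<And>i j l. i < m \<Longrightarrow> j < k i \<Longrightarrow> l < N \<Longrightarrow> A i j l \<in> K"
    and A_def: "\<And>i l. i < m \<Longrightarrow> l < N \<Longrightarrow>
            u i [^] l = (\<Oplus>j\<in>{..<k i}. A i j l \<otimes> u i [^] j)"
  shows "mat_rank_over L K {(i, j). i < m \<and> j < k i} N (\<lambda>(i, j) l. A i j l)
           = min (\<Sum>i<m. k i) N"
proof -
  interpret algebraic_closure L K by (rule closure)
  have K: "subfield K L" by (rule subfield_axioms)
  have sub: "subring K L" using subfieldE(1)[OF K] .
  have KC: "\<And>a. a \<in> K \<Longrightarrow> a \<in> carrier L" using subfieldE(3)[OF K] by auto
  have alg: "\<And>i. i < m \<Longrightarrow> (algebraic over K) (u i)"
    using algebraic_extension u_in by auto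
  have kdeg: "k i = degree (Irr K (u i))" if i: "i < m" for i
  proof -
    have ins: "insert (u i) K \<subseteq> carrier L" using u_in[OF i] KC by auto
    have "simple_extension K (u i) = generate_field L (insert (u i) K)"
    proof (rule generate_fieldI[OF ins])
      show "subfield (simple_extension K (u i)) L"
        using simple_extension_is_subfield[OF K u_in[OF i]] alg[OF i] by simp
      show "insert (u i) K \<subseteq> simple_extension K (u i)"
        using simple_extension_incl[OF subfieldE(3)[OF K] u_in[OF i]] simple_extension_mem[OF sub u_in[OF i]]
        by auto
      show "simple_extension K (u i) \<subseteq> K'" if "subfield K' L" "insert (u i) K \<subseteq> K'" for K'
        using simple_extension_subring_incl[OF subfieldE(1)[OF that(1)]] that(2) by auto
    qed
    then show ?thesis
      using k_def[OF i] simple_extension_dim[OF K u_in[OF i] alg[OF i]] by (simp add: over_def)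
  qed
  define n where "n = (\<Sum>i<m. k i)"
  define s where "s = min n N"
  define Rs where "Rs = {(i, j). i < m \<and> j < k i}"
  define M where "M = (\<lambda>(i, j) l. A i j l :: 'a)"
  have RsS: "Rs = Sigma {..<m} (\<lambda>i. {..<k i})" unfolding Rs_def by auto
  have finRs: "finite Rs" unfolding RsS by auto
  have cardRs: "card Rs = n" unfolding RsS n_def by (subst card_SigmaI) auto
  have MK: "\<And>r l. r \<in> Rs \<Longrightarrow> l < N \<Longrightarrow> M r l \<in> K"
    unfolding Rs_def M_def using A_in by auto
  have colind: "\<forall>l<s. d l = \<zero>"
    if dK: "\<forall>l<s. d l \<in> K" and dz: "\<forall>r\<in>Rs. (\<Oplus>l\<in>{..<s}. d l \<otimes> M r l) = \<zero>" for d
  proof -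
    define p0 where "p0 = rev (map d [0..<s])"
    define P where "P = normalize p0"
    have p0K: "set p0 \<subseteq> K" unfolding p0_def using dK by auto
    have p0C: "set p0 \<subseteq> carrier L" using p0K KC by auto
    have PC: "P \<in> carrier (K[X])"
      unfolding P_def univ_poly_carrier[symmetric] using normalize_gives_polynomial[OF p0K] .
    have dC: "\<And>l. l < s \<Longrightarrow> d l \<in> carrier L" using dK KC by auto
    have evP: "eval P (u i) = \<zero>" if i: "i \<in> {..<m}" for i
    proof -
      have i': "i < m" using i by auto
      have ui: "u i \<in> carrier L" using u_in[OF i'] .
      have AC: "\<And>j l. j < k i \<Longrightarrow> l < s \<Longrightarrow> A i j l \<in> carrier L"
        using A_in[OF i'] KC s_def by auto
      have "eval P (u i) = eval p0 (u i)" unfolding P_def using eval_normalize[OF p0C ui] .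
      also have "\<dots> = (\<Oplus>l\<in>{..<s}. d l \<otimes> u i [^] l)"
        unfolding p0_def using eval_rev_map[OF ui dC] by simp
      also have "\<dots> = (\<Oplus>l\<in>{..<s}. \<Oplus>j\<in>{..<k i}. d l \<otimes> (A i j l \<otimes> u i [^] j))"
      proof (intro finsum_cong')
        fix l assume l: "l \<in> {..<s}"
        then have lN: "l < N" using s_def by auto
        show "d l \<otimes> u i [^] l = (\<Oplus>j\<in>{..<k i}. d l \<otimes> (A i j l \<otimes> u i [^] j))"
          unfolding A_def[OF i' lN] using l dC AC ui by (intro finsum_rdistr) auto
      qed (use dC AC ui in \<open>auto intro!: finsum_closed\<close>)
      also have "\<dots> = (\<Oplus>j\<in>{..<k i}. \<Oplus>l\<in>{..<s}. d l \<otimes> (A i j l \<otimes> u i [^] j))"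
        using dC AC ui by (intro finsum_swap) auto
      also have "\<dots> = (\<Oplus>j\<in>{..<k i}. (\<Oplus>l\<in>{..<s}. d l \<otimes> A i j l) \<otimes> u i [^] j)"
      proof (intro finsum_cong')
        fix j assume j: "j \<in> {..<k i}"
        have "(\<Oplus>l\<in>{..<s}. d l \<otimes> (A i j l \<otimes> u i [^] j)) = (\<Oplus>l\<in>{..<s}. (d l \<otimes> A i j l) \<otimes> u i [^] j)"
          using j dC AC ui by (intro finsum_cong') (auto simp: m_assoc)
        also have "\<dots> = (\<Oplus>l\<in>{..<s}. d l \<otimes> A i j l) \<otimes> u i [^] j"
          using j dC AC ui by (intro finsum_ldistr[symmetric]) auto
        finally show "(\<Oplus>l\<in>{..<s}. d l \<otimes> (A i j l \<otimes> u i [^] j)) = (\<Oplus>l\<in>{..<s}. d l \<otimes> A i j l) \<otimes> u i [^] j" .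
      qed (use dC AC ui in \<open>auto intro!: finsum_closed\<close>)
      also have "\<dots> = (\<Oplus>j\<in>{..<k i}. \<zero>)"
      proof (intro finsum_cong')
        fix j assume j: "j \<in> {..<k i}"
        have "(i, j) \<in> Rs" using i' j Rs_def by auto
        then have "(\<Oplus>l\<in>{..<s}. d l \<otimes> A i j l) = \<zero>" using dz unfolding M_def by auto
        then show "(\<Oplus>l\<in>{..<s}. d l \<otimes> A i j l) \<otimes> u i [^] j = \<zero>" using ui by simp
      qed auto
      finally show ?thesis by (simp add: finsum_zero)
    qed
    have P0: "P = []"
    proof (rule ccontr)
      assume Pne: "P \<noteq> []"
      have "(\<Sum>i\<in>{..<m}. degree (Irr K (u i))) \<le> degree P"
        using deg_ge[OF K _ _ _ PC Pne evP, of "{..<m}"] u_in alg distinct_minpoly by auto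
      moreover have "(\<Sum>i\<in>{..<m}. degree (Irr K (u i))) = n"
        unfolding n_def using kdeg by simp
      moreover have "length P \<le> s" unfolding P_def p0_def using normalize_length_le[of "rev (map d [0..<s])"] by simp
      ultimately have "n < s" using Pne by (cases P) auto
      then show False unfolding s_def by simp
    qed
    have "set p0 \<subseteq> {\<zero>}" using normalize_nil P0 P_def by auto
    then have z: "set p0 \<subseteq> {\<zero>}" .
    show ?thesis
    proof (intro allI impI)
      fix l assume "l < s"
      then have "d l \<in> set p0" unfolding p0_def by simp
      then show "d l = \<zero>" using z by blast
    qed
  qed
  have MKs: "\<And>r l. r \<in> Rs \<Longrightarrow> l < s \<Longrightarrow> M r l \<in> K" using MK s_def by auto
  have ex: "\<exists>I \<subseteq> Rs. card I = s \<and> rows_indep_over L K I s M"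
    by (rule L2[OF K finRs MKs colind])
  obtain I where I: "I \<subseteq> Rs" "card I = s" "rows_indep_over L K I s M"
    using ex by auto
  have sN: "s \<le> N" by (simp add: s_def)
  have IN: "rows_indep_over L K I N M"
    unfolding rows_indep_over_def
  proof (intro allI impI)
    fix c assume c1: "\<forall>i\<in>I. c i \<in> K" and c2: "\<forall>l<N. (\<Oplus>i\<in>I. c i \<otimes> M i l) = \<zero>"
    have "\<forall>l<s. (\<Oplus>i\<in>I. c i \<otimes> M i l) = \<zero>" using c2 sN by simp
    then show "\<forall>i\<in>I. c i = \<zero>" using I(3) c1 unfolding rows_indep_over_def by blast
  qed
  define Cs where "Cs = {card I | I. I \<subseteq> Rs \<and> rows_indep_over L K I N M}"
  have le: "c \<le> s" if cCs: "c \<in> Cs" for c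
  proof -
    obtain J where J: "c = card J" "J \<subseteq> Rs" "rows_indep_over L K J N M"
      using cCs unfolding Cs_def by blast
    have "card J \<le> n" using card_mono[OF finRs J(2)] cardRs by simp
    moreover have "card J \<le> N"
    proof -
      have "\<And>i l. i \<in> J \<Longrightarrow> l < N \<Longrightarrow> M i l \<in> K" using MK J(2) by blast
      then show ?thesis using indep_card_le[OF K finite_subset[OF J(2) finRs] _ J(3)] by blast
    qed
    ultimately show ?thesis using J(1) s_def by simp
  qed
  have sC: "s \<in> Cs" unfolding Cs_def using I IN by blast
  have fC: "finite Cs"
  proof (rule finite_subset)
    show "Cs \<subseteq> {..s}" using le by blast
  qed simp
  have "Max Cs = s" by (rule Max_eqI[OF fC le sC])
  then have "mat_rank_over L K Rs N M = s" unfolding mat_rank_over_def Cs_def by simp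
  then show ?thesis unfolding Rs_def M_def s_def n_def .
qed

end
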